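(* Take $\Omega=(0,\infty)$. The set $S=(0,\tfrac14]\cup\{\tfrac13,1\}$ is a fundamental set for the gamma function, i.e. $\mathrm{Cl}_\Omega(S)=(0,\infty)$.
   Context: Let $\Omega$ be either $(0,\infty)$ or $D=\mathbb{C}\setminus\{0,-1,-2,\dots\}$. An admissible instance (relative to $\Omega$) is one of the following finite lists of points, all entries of which are required to lie in $\Omega$: (i) $(z+1,\,z)$ for $z\in\Omega$ with $z+1\in\Omega$ (corresponding to the identity $\Gamma(z+1)=z\Gamma(z)$); (ii) $(z,\,1-z)$ for $z\in\Omega\setminus\mathbb{Z}$ with $1-z\in\Omega$ (corresponding to $\Gamma(z)\Gamma(1-z)=\pi/\sin(\pi z)$); (iii) for an integer $n\ge 2$, $\big(z,\,\tfrac{z}{n},\,\tfrac{z+1}{n},\dots,\tfrac{z+n-1}{n}\big)$ (corresponding to Gauss's multiplication formula $(2\pi)^{(n-1)/2}n^{1/2-z}\Gamma(z)=\prod_{j=0}^{n-1}\Gamma(\tfrac{z+j}{n})$). For $B\subseteq\Omega$, a point $p\in\Omega$ is obtained from $B$ in one step if there is an admissible instance in which $p$ occurs exactly once as an entry and every other entry lies in $B$. Set $B_0=B$, $B_{i+1}=B_i\cup\{p: p \text{ obtained from } B_i \text{ in one step}\}$, and $\mathrm{Cl}_\Omega(B)=\bigcup_{i\ge0}B_i$ (the set of points at which the value of $\Gamma$ is determined by its values on $B$ via finitely many applications of the identities). For $A,B\subseteq\Omega$ write $A\preceq B$ if $A\subseteq \mathrm{Cl}_\Omega(B)$. A set $S\subseteq\Omega$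 is a fundamental set (for $\Gamma$ on $\Omega$) if $\mathrm{Cl}_\Omega(S)=\Omega$. *)

theory Defs
  imports Complex_Main
begin

text \<open>Admissible instances relative to a domain \<Omega>: finite lists of points, all in \<Omega>,
 of one of the three shapes (shift, reflection, Gauss multiplication).\<close>
definition admissible :: "'a::field_char_0 set \<Rightarrow> 'a list \<Rightarrow> bool" where
  "admissible \<Omega> L \<longleftrightarrow> set L \<subseteq> \<Omega> \<and>
     ((\<exists>z. L = [z + 1, z]) \<or>
      (\<exists>z. z \<notin> \<int> \<and> L = [z, 1 - z]) \<or>
      (\<exists>z (n::nat). n \<ge> 2 \<and> L = z # map (\<lambda>j. (z + of_nat j) / of_nat n) [0..<n]))"

definition one_step :: "'a::field_char_0 set \<Rightarrow> 'a set \<Rightarrow> 'a \<Rightarrow> bool" where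
  "one_step \<Omega> B p \<longleftrightarrow> p \<in> \<Omega> \<and>
     (\<exists>L. admissible \<Omega> L \<and> count_list L p = 1 \<and> (\<forall>q\<in>set L. q \<noteq> p \<longrightarrow> q \<in> B))"

primrec cl_iter :: "'a::field_char_0 set \<Rightarrow> 'a set \<Rightarrow> nat \<Rightarrow> 'a set" where
  "cl_iter \<Omega> B 0 = B"
| "cl_iter \<Omega> B (Suc i) = cl_iter \<Omega> B i \<union> {p. one_step \<Omega> (cl_iter \<Omega> B i) p}"

definition Cl :: "'a::field_char_0 set \<Rightarrow> 'a set \<Rightarrow> 'a set" where
  "Cl \<Omega> B = (\<Union>i. cl_iter \<Omega> B i)"

definition fundamental_set :: "'a::field_char_0 set \<Rightarrow> 'a set \<Rightarrow> bool" where
  "fundamental_set \<Omega> S \<longleftrightarrow> Cl \<Omega> S = \<Omega>"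

end

theory Submission
  imports Defs
begin

lemma cl_mono: "i \<le> j \<Longrightarrow> cl_iter \<Omega> B i \<subseteq> cl_iter \<Omega> B j"
  by (induction j) (auto simp: le_Suc_eq)

lemma finite_in: "finite F \<Longrightarrow> F \<subseteq> Cl \<Omega> B \<Longrightarrow> \<exists>i. F \<subseteq> cl_iter \<Omega> B i"
proof (induction F rule: finite_induct)
  case empty then show ?case by auto
next
  case (insert x F)
  then obtain i where i: "F \<subseteq> cl_iter \<Omega> B i" by auto
  from insert obtain j where j: "x \<in> cl_iter \<Omega> B j" by (auto simp: Cl_def)
  have "F \<subseteq> cl_iter \<Omega> B (max i j)" using i cl_mono[of i "max i j"] by auto
  moreover have "x \<in> cl_iter \<Omega> B (max i j)" using j cl_mono[of j "max i j"] by auto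
  ultimately show ?case by auto
qed

lemma closed_step:
  assumes "admissible \<Omega> L" "count_list L p = 1" "p \<in> \<Omega>"
    "\<forall>q\<in>set L. q \<noteq> p \<longrightarrow> q \<in> Cl \<Omega> B"
  shows "p \<in> Cl \<Omega> B"
proof -
  have "set L - {p} \<subseteq> Cl \<Omega> B" using assms(4) by auto
  then obtain i where i: "set L - {p} \<subseteq> cl_iter \<Omega> B i" using finite_in by blast
  have "one_step \<Omega> (cl_iter \<Omega> B i) p"
    unfolding one_step_def using assms i by blast
  then have "p \<in> cl_iter \<Omega> B (Suc i)" by simp
  then show ?thesis unfolding Cl_def by blast
qed

lemma Cl_sub: "B \<subseteq> \<Omega> \<Longrightarrow> Cl \<Omega> B \<subseteq> \<Omega>"
proof -
  assume B: "B \<subseteq> \<Omega>"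
  have "cl_iter \<Omega> B i \<subseteq> \<Omega>" for i
    by (induction i) (use B in \<open>auto simp: one_step_def\<close>)
  then show ?thesis unfolding Cl_def by blast
qed

lemma base_in: "B \<subseteq> Cl \<Omega> B"
  unfolding Cl_def by (metis UNIV_I UN_upper cl_iter.simps(1))

abbreviation "Om \<equiv> {0::real<..}"
abbreviation "SS \<equiv> ({0<..1/4} \<union> {1/3, 1::real})"
abbreviation "C \<equiv> Cl Om SS"

lemma shift_up: assumes "z \<in> C" "z > 0" shows "z + 1 \<in> C"
  apply (rule closed_step[of Om "[z+1, z]"])
  using assms by (auto simp: admissible_def)

lemma reflect: assumes "z \<in> C" "0 < z" "z < 1" "z \<noteq> 1/2" shows "1 - z \<in> C"
proof -
  have "z \<notin> \<int>"
  proof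
    assume "z \<in> \<int>"
    then obtain k where "z = of_int k" by (auto elim: Ints_cases)
    with assms show False by auto
  qed
  show ?thesis
    apply (rule closed_step[of Om "[z, 1 - z]"])
    using assms \<open>z \<notin> \<int>\<close> by (auto simp: admissible_def)
qed

lemma dup_list: "z # map (\<lambda>j. (z + of_nat j) / of_nat 2) [0..<2] = [z, z/2, (z+1)/(2::real)]"
  by (simp add: upt_rec)

lemma half_in: "1/2 \<in> C"
proof (rule closed_step[of Om "[1, 1/2, 1]"])
  show "admissible Om [1, 1 / 2, 1]"
    unfolding admissible_def
    apply (intro conjI disjI2)
     apply simp
    apply (rule exI[of _ 1], rule exI[of _ 2])
    using dup_list[of 1] by simp
  have "(1::real) \<in> C" using base_in[of SS Om] by auto
  then show "\<forall>q\<in>set [1, 1 / 2, 1]. q \<noteq> 1 / 2 \<longrightarrow> q \<in> C" by auto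
qed auto

lemma dup_down: assumes "2*x \<in> C" "x + 1/2 \<in> C" "x > 0" shows "x \<in> C"
proof (rule closed_step[of Om "[2*x, x, x + 1/2]"])
  show "admissible Om [2*x, x, x + 1/2]"
    unfolding admissible_def
    apply (intro conjI disjI2)
    using assms(3) apply simp
    apply (rule exI[of _ "2*x"], rule exI[of _ 2])
    using dup_list[of "2*x"] by (simp add: field_simps)
  show "\<forall>q\<in>set [2*x, x, x + 1/2]. q \<noteq> x \<longrightarrow> q \<in> C" using assms by auto
qed (use assms in auto)

lemma step_T: assumes "1/4 < y" "y < 1/2" "1 - 2*y \<in> C" shows "y \<in> C"
proof -
  have "1 - (1 - 2*y) \<in> C" using reflect[OF assms(3)] assms by auto
  then have a: "2*y \<in> C" by simp
  have "1/2 - y \<in> C" using base_in[of SS Om] assms by auto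
  then have "1 - (1/2 - y) \<in> C" using reflect[of "1/2 - y"] assms by auto
  then have b: "y + 1/2 \<in> C" by (simp add: algebra_simps)
  show ?thesis using dup_down[OF a b] assms by auto
qed

lemma iter: "\<forall>y. 0 < y \<and> y < 1/2 \<and> \<bar>y - 1/3\<bar> * 2^k \<ge> 1/12 \<longrightarrow> y \<in> C"
proof (induction k)
  case 0
  show ?case
  proof (intro allI impI)
    fix y :: real assume h: "0 < y \<and> y < 1/2 \<and> \<bar>y - 1/3\<bar> * 2^0 \<ge> 1/12"
    show "y \<in> C"
    proof (cases "y \<le> 1/4")
      case True then show ?thesis using base_in[of SS Om] h by auto
    next
      case False
      then have "1 - 2*y \<in> C" using base_in[of SS Om] h by (auto simp: abs_if split: if_splits)
      then show ?thesis using step_T False h by auto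
    qed
  qed
next
  case (Suc k)
  show ?case
  proof (intro allI impI)
    fix y :: real assume h: "0 < y \<and> y < 1/2 \<and> \<bar>y - 1/3\<bar> * 2^Suc k \<ge> 1/12"
    show "y \<in> C"
    proof (cases "y \<le> 1/4")
      case True then show ?thesis using base_in[of SS Om] h by auto
    next
      case False
      have "\<bar>(1 - 2*y) - 1/3\<bar> * 2^k = \<bar>y - 1/3\<bar> * 2^Suc k" by (simp add: abs_if)
      then have "1 - 2*y \<in> C" using Suc h False by auto
      then show ?thesis using step_T False h by auto
    qed
  qed
qed

lemma lower_half: assumes "0 < y" "y \<le> 1/2" shows "y \<in> C"
proof -
  consider "y = 1/2" | "y = 1/3" | "y < 1/2" "y \<noteq> 1/3" using assms by linarith
  then show ?thesis
  proof cases
    case 1 then show ?thesis using half_in by (simp only:)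
  next
    case 2
    have "(1/3::real) \<in> C" using base_in[of SS Om] by auto
    then show ?thesis using 2 by (simp only:)
  next
    case 3
    have "\<bar>y - 1/3\<bar> > 0" using 3 by auto
    then obtain k where "1/12 / \<bar>y - 1/3\<bar> < 2^k"
      using real_arch_pow[of 2 "1/12 / \<bar>y - 1/3\<bar>"] by auto
    then have "\<bar>y - 1/3\<bar> * 2^k \<ge> 1/12" using \<open>\<bar>y - 1/3\<bar> > 0\<close>
      by (simp add: field_simps)
    then show ?thesis using iter[of k] assms 3 by auto
  qed
qed

lemma unit_in: assumes "0 < y" "y \<le> 1" shows "y \<in> C"
proof (cases "y \<le> 1/2")
  case True then show ?thesis using lower_half assms by auto
next
  case False
  show ?thesis
  proof (cases "y = 1")
    case True then show ?thesis using base_in[of SS Om] by auto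
  next
    case ne: False
    have "1 - y \<in> C" using lower_half[of "1 - y"] False assms ne by auto
    then have "1 - (1 - y) \<in> C" using reflect[of "1 - y"] False assms ne by auto
    then show ?thesis by simp
  qed
qed

lemma all_in: "\<forall>y. 0 < y \<and> y \<le> real n + 1 \<longrightarrow> y \<in> C"
proof (induction n)
  case 0 then show ?case using unit_in by auto
next
  case (Suc n)
  show ?case
  proof (intro allI impI)
    fix y :: real assume h: "0 < y \<and> y \<le> real (Suc n) + 1"
    show "y \<in> C"
    proof (cases "y \<le> real n + 1")
      case True then show ?thesis using Suc h by auto
    next
      case False
      then have "y - 1 \<in> C" using Suc h by auto
      then have "y - 1 + 1 \<in> C" using shift_up[of "y - 1"] False by auto
      then show ?thesis by simp
    qed
  qed
qed

theorem mainTheorem5: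
  shows "fundamental_set {0::real<..} ({0<..1/4} \<union> {1/3, 1})"
  unfolding fundamental_set_def
proof
  show "C \<subseteq> Om" by (rule Cl_sub) auto
  show "Om \<subseteq> C"
  proof
    fix y :: real assume "y \<in> Om"
    obtain n :: nat where "y \<le> real n" using real_arch_simple by auto
    then show "y \<in> C" using all_in[of n] \<open>y \<in> Om\<close> by auto
  qed
qed

end
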